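(* Let $\mathcal{T}$ be a finite tree whose vertex set is partitioned into two sets $X$ and $Y$ with $\mathrm{Card}(X),\mathrm{Card}(Y)\ge 2$, every edge joining a vertex of $X$ to a vertex of $Y$; let $E\subseteq X\times Y$ be its set of edges. For $x\in X$, $y\in Y$ let $Y_x=\{y\in Y:(x,y)\in E\}$ and $X_y=\{x\in X:(x,y)\in E\}$. Let $(G,+)$ be an abelian group and $H$ a subgroup of $G$. Suppose $g:X\cup Y\cup E\to G$ satisfies: (1) $g(X\cup Y)\subseteq H$; (2) for all $x\in X$, $g(x)=\sum_{y\in Y_x}g(x,y)$, and for all $y\in Y$, $g(y)=\sum_{x\in X_y}g(x,y)$. Then $g(x,y)\in H$ for all $(x,y)\in E$. *)

theory Defs
  imports Main
begin

definition adj :: "('v \<times> 'v) set \<Rightarrow> 'v \<Rightarrow> 'v \<Rightarrow> bool" where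
  "adj E u v \<longleftrightarrow> (u, v) \<in> E \<or> (v, u) \<in> E"

definition is_walk :: "'v set \<Rightarrow> ('v \<times> 'v) set \<Rightarrow> 'v list \<Rightarrow> bool" where
  "is_walk V E ps \<longleftrightarrow> ps \<noteq> [] \<and> set ps \<subseteq> V \<and>
     (\<forall>i. Suc i < length ps \<longrightarrow> adj E (ps ! i) (ps ! Suc i))"

definition graph_connected :: "'v set \<Rightarrow> ('v \<times> 'v) set \<Rightarrow> bool" where
  "graph_connected V E \<longleftrightarrow>
     (\<forall>u\<in>V. \<forall>v\<in>V. \<exists>ps. is_walk V E ps \<and> hd ps = u \<and> last ps = v)"

definition is_cycle :: "'v set \<Rightarrow> ('v \<times> 'v) set \<Rightarrow> 'v list \<Rightarrow> bool" where
  "is_cycle V E cs \<longleftrightarrow> length cs \<ge> 3 \<and> distinct cs \<and> is_walk V E cs \<and>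
     adj E (last cs) (hd cs)"

definition graph_acyclic :: "'v set \<Rightarrow> ('v \<times> 'v) set \<Rightarrow> bool" where
  "graph_acyclic V E \<longleftrightarrow> \<not> (\<exists>cs. is_cycle V E cs)"

definition bipartite_tree :: "'v set \<Rightarrow> 'v set \<Rightarrow> ('v \<times> 'v) set \<Rightarrow> bool" where
  "bipartite_tree X Y E \<longleftrightarrow> finite X \<and> finite Y \<and> X \<inter> Y = {} \<and> E \<subseteq> X \<times> Y \<and>
     X \<union> Y \<noteq> {} \<and> graph_connected (X \<union> Y) E \<and> graph_acyclic (X \<union> Y) E"

definition add_subgroup :: "'a::ab_group_add set \<Rightarrow> bool" where
  "add_subgroup H \<longleftrightarrow> 0 \<in> H \<and> (\<forall>a\<in>H. \<forall>b\<in>H. a + b \<in> H) \<and> (\<forall>a\<in>H. - a \<in> H)"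

end

theory Submission
  imports Defs
begin

lemma walk_mono: "is_walk V E ps \<Longrightarrow> E \<subseteq> E' \<Longrightarrow> is_walk V E' ps"
  unfolding is_walk_def adj_def by blast

lemma acyclic_mono: "graph_acyclic V E' \<Longrightarrow> E \<subseteq> E' \<Longrightarrow> graph_acyclic V E"
  unfolding graph_acyclic_def is_cycle_def adj_def using walk_mono[of V E _ E']
  by (metis (no_types, lifting) in_mono)

lemma leaf_exists:
  assumes fin: "finite V" and EV: "E \<subseteq> V \<times> V" and noloop: "\<And>u. (u,u) \<notin> E"
    and ne: "E \<noteq> {}" and acyc: "graph_acyclic V E"
  shows "\<exists>v w. adj E v w \<and> (\<forall>w'. adj E v w' \<longrightarrow> w' = w)"
proof -
  define P where "P = {ps. is_walk V E ps \<and> distinct ps}"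
  have "P \<subseteq> {ps. set ps \<subseteq> V \<and> length ps \<le> card V}"
    unfolding P_def is_walk_def using distinct_card card_mono fin
    by (metis (mono_tags, lifting) mem_Collect_eq subsetI)
  moreover have "finite {ps. set ps \<subseteq> V \<and> length ps \<le> card V}"
    using finite_lists_length_le[OF fin] by simp
  ultimately have finP: "finite P" by (rule finite_subset)
  obtain a b where ab: "(a,b) \<in> E" using ne by auto
  have "a \<noteq> b" using ab noloop by auto
  hence abP: "[a,b] \<in> P" using ab EV unfolding P_def is_walk_def adj_def
    by (auto simp: less_Suc_eq)
  define m where "m = Max (length ` P)"
  have "m \<in> length ` P" unfolding m_def using finP abP by (intro Max_in) auto
  then obtain ps where ps: "ps \<in> P" "length ps = m" by auto
  have maxP: "\<And>qs. qs \<in> P \<Longrightarrow> length qs \<le> m" unfolding m_def using finP by auto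
  have "2 \<le> m" using maxP[OF abP] by simp
  define n where "n = length ps"
  have n2: "n \<ge> 2" using ps \<open>2 \<le> m\<close> n_def by simp
  have walk: "is_walk V E ps" and dist: "distinct ps" using ps unfolding P_def by auto
  define v where "v = last ps"
  define w where "w = ps ! (n - 2)"
  have vlast: "v = ps ! (n - 1)" unfolding v_def n_def using n2 n_def
    by (metis last_conv_nth list.size(3) not_numeral_le_zero)
  have "adj E (ps ! (n-2)) (ps ! Suc (n-2))" using walk n2 unfolding is_walk_def n_def by auto
  moreover have "Suc (n-2) = n - 1" using n2 by simp
  ultimately have vw: "adj E v w" unfolding w_def using vlast adj_def by metis
  have "\<forall>w'. adj E v w' \<longrightarrow> w' = w"
  proof (intro allI impI)
    fix w' assume vw': "adj E v w'"
    have w'V: "w' \<in> V" using vw' EV unfolding adj_def by auto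
    show "w' = w"
    proof (cases "w' \<in> set ps")
      case False
      have "ps @ [w'] \<in> P"
        unfolding P_def is_walk_def
      proof (intro CollectI conjI allI impI)
        show "ps @ [w'] \<noteq> []" by simp
        show "set (ps @ [w']) \<subseteq> V" using walk w'V unfolding is_walk_def by auto
        show "distinct (ps @ [w'])" using dist False by simp
        fix i assume i: "Suc i < length (ps @ [w'])"
        show "adj E ((ps @ [w']) ! i) ((ps @ [w']) ! Suc i)"
        proof (cases "Suc i < n")
          case True
          thus ?thesis using walk unfolding is_walk_def n_def by (auto simp: nth_append)
        next
          case False
          hence "i = n - 1" "Suc i = n" using i n_def by auto
          thus ?thesis using vw' vlast n_def n2 by (auto simp: nth_append)
        qed
      qed
      hence "n + 1 \<le> m" using maxP[of "ps @ [w']"] by (simp add: n_def)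
      thus ?thesis using ps n_def by simp
    next
      case True
      then obtain j where j: "j < n" "ps ! j = w'" unfolding n_def by (metis in_set_conv_nth)
      have "j \<noteq> n - 1" using j vlast vw' noloop unfolding adj_def by auto
      show ?thesis
      proof (rule ccontr)
        assume "w' \<noteq> w"
        hence "j \<noteq> n - 2" using j w_def by auto
        hence jl: "j + 3 \<le> n" using j \<open>j \<noteq> n - 1\<close> by auto
        define cs where "cs = drop j ps"
        have "is_cycle V E cs"
          unfolding is_cycle_def
        proof (intro conjI)
          show "3 \<le> length cs" using jl n_def cs_def by simp
          show "distinct cs" using dist cs_def by simp
          show "is_walk V E cs" unfolding is_walk_def
          proof (intro conjI allI impI)
            show "cs \<noteq> []" using jl n_def cs_def by simp
            show "set cs \<subseteq> V" using walk cs_def set_drop_subset unfolding is_walk_def by fast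
            fix i assume "Suc i < length cs"
            hence "Suc (j + i) < n" using cs_def n_def by simp
            hence "adj E (ps ! (j+i)) (ps ! Suc (j+i))" using walk unfolding is_walk_def n_def by auto
            thus "adj E (cs ! i) (cs ! Suc i)" using cs_def jl n_def by simp
          qed
          have "last cs = v" using cs_def v_def jl n_def by simp
          moreover have "hd cs = w'" using cs_def j n_def by (simp add: hd_drop_conv_nth)
          ultimately show "adj E (last cs) (hd cs)" using vw' by simp
        qed
        thus False using acyc unfolding graph_acyclic_def by blast
      qed
    qed
  qed
  thus ?thesis using vw by blast
qed


lemma main_ind:
  fixes X Y :: "'v set" and E :: "('v \<times> 'v) set"
    and H :: "'a::ab_group_add set"
    and gv :: "'v \<Rightarrow> 'a" and ge :: "'v \<times> 'v \<Rightarrow> 'a"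
  assumes finX: "finite X" and finY: "finite Y" and disj: "X \<inter> Y = {}"
    and sub: "add_subgroup H"
  shows "E \<subseteq> X \<times> Y \<Longrightarrow> graph_acyclic (X \<union> Y) E \<Longrightarrow> (\<forall>u\<in>X \<union> Y. gv u \<in> H)
    \<Longrightarrow> (\<forall>x\<in>X. gv x = (\<Sum>y\<in>{y\<in>Y. (x, y) \<in> E}. ge (x, y)))
    \<Longrightarrow> (\<forall>y\<in>Y. gv y = (\<Sum>x\<in>{x\<in>X. (x, y) \<in> E}. ge (x, y)))
    \<Longrightarrow> \<forall>e\<in>E. ge e \<in> H"
proof (induction "card E" arbitrary: E gv rule: less_induct)
  case (less E gv)
  note EXY = less.prems(1) and acyc = less.prems(2) and gH = less.prems(3)
    and sX = less.prems(4) and sY = less.prems(5)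
  have finE: "finite E" using EXY finX finY by (meson finite_SigmaI finite_subset)
  have H0: "0 \<in> H" and Hadd: "\<And>a b. a \<in> H \<Longrightarrow> b \<in> H \<Longrightarrow> a + b \<in> H"
    and Hneg: "\<And>a. a \<in> H \<Longrightarrow> - a \<in> H" using sub unfolding add_subgroup_def by auto
  have Hdiff: "\<And>a b. a \<in> H \<Longrightarrow> b \<in> H \<Longrightarrow> a - b \<in> H"
    using Hadd Hneg by (metis diff_conv_add_uminus)
  show ?case
  proof (cases "E = {}")
    case True thus ?thesis by simp
  next
    case False
    have noloop: "\<And>u. (u,u) \<notin> E" using EXY disj by blast
    have EV: "E \<subseteq> (X \<union> Y) \<times> (X \<union> Y)" using EXY by blast
    obtain v w where vw: "adj E v w" and uniq: "\<And>w'. adj E v w' \<Longrightarrow> w' = w"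
      using leaf_exists[OF _ EV noloop False acyc] finX finY by blast
    show ?thesis
    proof (cases "v \<in> X")
      case True
      have e0: "(v,w) \<in> E" using vw EXY disj True unfolding adj_def by blast
      hence wY: "w \<in> Y" using EXY by blast
      have vnw: "v \<noteq> w" using True wY disj by blast
      have setv: "{y\<in>Y. (v, y) \<in> E} = {w}" using uniq wY e0 unfolding adj_def by blast
      have "gv v = ge (v,w)" using sX True setv by simp
      hence gev: "ge (v,w) \<in> H" using True gH by (metis UnI1)
      define E' where "E' = E - {(v,w)}"
      define gv' where "gv' = (\<lambda>u. if u = v then 0 else if u = w then gv w - ge (v,w) else gv u)"
      have cardlt: "card E' < card E" unfolding E'_def using finE e0 by (metis card_Diff1_less)
      have "\<forall>e\<in>E'. ge e \<in> H"
      proof (rule less.hyps[OF cardlt])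
        show "E' \<subseteq> X \<times> Y" using EXY E'_def by blast
        show "graph_acyclic (X \<union> Y) E'" using acyclic_mono[OF acyc] E'_def by blast
        show "\<forall>u\<in>X \<union> Y. gv' u \<in> H" using gH gev H0 Hdiff wY unfolding gv'_def by auto
        show "\<forall>x\<in>X. gv' x = (\<Sum>y\<in>{y\<in>Y. (x, y) \<in> E'}. ge (x, y))"
        proof
          fix x assume xX: "x \<in> X"
          have xw: "x \<noteq> w" using xX wY disj by blast
          show "gv' x = (\<Sum>y\<in>{y\<in>Y. (x, y) \<in> E'}. ge (x, y))"
          proof (cases "x = v")
            case True
            have e: "{y\<in>Y. (x, y) \<in> E'} = {}" using setv True E'_def by blast
            show ?thesis unfolding e using True gv'_def by simp
          next
            case False
            have "{y\<in>Y. (x, y) \<in> E'} = {y\<in>Y. (x, y) \<in> E}" using False E'_def by blast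
            thus ?thesis using False xw gv'_def sX xX by simp
          qed
        qed
        show "\<forall>y\<in>Y. gv' y = (\<Sum>x\<in>{x\<in>X. (x, y) \<in> E'}. ge (x, y))"
        proof
          fix y assume yY: "y \<in> Y"
          have yv: "y \<noteq> v" using True yY disj by blast
          show "gv' y = (\<Sum>x\<in>{x\<in>X. (x, y) \<in> E'}. ge (x, y))"
          proof (cases "y = w")
            case True
            have st: "{x\<in>X. (x, y) \<in> E'} = {x\<in>X. (x, y) \<in> E} - {v}" using True E'_def by blast
            have "v \<in> {x\<in>X. (x, y) \<in> E}" using True e0 \<open>v \<in> X\<close> by blast
            hence "(\<Sum>x\<in>{x\<in>X. (x, y) \<in> E'}. ge (x, y)) = (\<Sum>x\<in>{x\<in>X. (x, y) \<in> E}. ge (x, y)) - ge (v, y)"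
              unfolding st using finX by (simp add: sum_diff1)
            thus ?thesis using True yv gv'_def sY yY by simp
          next
            case False
            have "{x\<in>X. (x, y) \<in> E'} = {x\<in>X. (x, y) \<in> E}" using False E'_def by blast
            thus ?thesis using False yv gv'_def sY yY by simp
          qed
        qed
      qed
      thus ?thesis using gev E'_def by blast
    next
      case False
      have vY: "v \<in> Y" using vw EXY False unfolding adj_def by blast
      have e0: "(w,v) \<in> E" using vw EXY disj vY unfolding adj_def by blast
      hence wX: "w \<in> X" using EXY by blast
      have vnw: "v \<noteq> w" using vY wX disj by blast
      have setv: "{x\<in>X. (x, v) \<in> E} = {w}" using uniq wX e0 unfolding adj_def by blast
      have "gv v = ge (w,v)" using sY vY setv by simp
      hence gev: "ge (w,v) \<in> H" using vY gH by (metis UnI2)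
      define E' where "E' = E - {(w,v)}"
      define gv' where "gv' = (\<lambda>u. if u = v then 0 else if u = w then gv w - ge (w,v) else gv u)"
      have cardlt: "card E' < card E" unfolding E'_def using finE e0 by (metis card_Diff1_less)
      have "\<forall>e\<in>E'. ge e \<in> H"
      proof (rule less.hyps[OF cardlt])
        show "E' \<subseteq> X \<times> Y" using EXY E'_def by blast
        show "graph_acyclic (X \<union> Y) E'" using acyclic_mono[OF acyc] E'_def by blast
        show "\<forall>u\<in>X \<union> Y. gv' u \<in> H" using gH gev H0 Hdiff wX unfolding gv'_def by auto
        show "\<forall>y\<in>Y. gv' y = (\<Sum>x\<in>{x\<in>X. (x, y) \<in> E'}. ge (x, y))"
        proof
          fix y assume yY: "y \<in> Y"
          have yw: "y \<noteq> w" using yY wX disj by blast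
          show "gv' y = (\<Sum>x\<in>{x\<in>X. (x, y) \<in> E'}. ge (x, y))"
          proof (cases "y = v")
            case True
            have e: "{x\<in>X. (x, y) \<in> E'} = {}" using setv True E'_def by blast
            show ?thesis unfolding e using True gv'_def by simp
          next
            case False
            have "{x\<in>X. (x, y) \<in> E'} = {x\<in>X. (x, y) \<in> E}" using False E'_def by blast
            thus ?thesis using False yw gv'_def sY yY by simp
          qed
        qed
        show "\<forall>x\<in>X. gv' x = (\<Sum>y\<in>{y\<in>Y. (x, y) \<in> E'}. ge (x, y))"
        proof
          fix x assume xX: "x \<in> X"
          have xv: "x \<noteq> v" using xX vY disj by blast
          show "gv' x = (\<Sum>y\<in>{y\<in>Y. (x, y) \<in> E'}. ge (x, y))"
          proof (cases "x = w")
            case True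
            have st: "{y\<in>Y. (x, y) \<in> E'} = {y\<in>Y. (x, y) \<in> E} - {v}" using True E'_def by blast
            have "v \<in> {y\<in>Y. (x, y) \<in> E}" using True e0 vY by blast
            hence "(\<Sum>y\<in>{y\<in>Y. (x, y) \<in> E'}. ge (x, y)) = (\<Sum>y\<in>{y\<in>Y. (x, y) \<in> E}. ge (x, y)) - ge (x, v)"
              unfolding st using finY by (simp add: sum_diff1)
            thus ?thesis using True xv gv'_def sX xX by simp
          next
            case False
            have "{y\<in>Y. (x, y) \<in> E'} = {y\<in>Y. (x, y) \<in> E}" using False E'_def by blast
            thus ?thesis using False xv gv'_def sX xX by simp
          qed
        qed
      qed
      thus ?thesis using gev E'_def by blast
    qed
  qed
qed

theorem lemma3p2:
  fixes X Y :: "'v set" and E :: "('v \<times> 'v) set"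
    and H :: "'a::ab_group_add set"
    and gv :: "'v \<Rightarrow> 'a" and ge :: "'v \<times> 'v \<Rightarrow> 'a"
  assumes tree: "bipartite_tree X Y E"
    and cardX: "card X \<ge> 2" and cardY: "card Y \<ge> 2"
    and sub: "add_subgroup H"
    and vert: "gv ` (X \<union> Y) \<subseteq> H"
    and sumX: "\<And>x. x \<in> X \<Longrightarrow> gv x = (\<Sum>y\<in>{y\<in>Y. (x, y) \<in> E}. ge (x, y))"
    and sumY: "\<And>y. y \<in> Y \<Longrightarrow> gv y = (\<Sum>x\<in>{x\<in>X. (x, y) \<in> E}. ge (x, y))"
  shows "\<forall>e\<in>E. ge e \<in> H"
proof -
  have t: "finite X" "finite Y" "X \<inter> Y = {}" "E \<subseteq> X \<times> Y" "graph_acyclic (X \<union> Y) E"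
    using tree unfolding bipartite_tree_def by auto
  show ?thesis
    using main_ind[OF t(1-3) sub t(4,5)] vert sumX sumY by blast
qed

end
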